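(* Consider a population of $N$ units, $M$ of which have a certain attribute, and a positive integer $r\le M$. Units are sampled without replacement until $r$ units with the attribute are observed; let $\boldsymbol n$ be the number of units checked, so that $\Pr\{\boldsymbol n=n\mid M\}=\binom{n-1}{r-1}\binom{N-n}{M-r}/\binom NM$ for $r\le n\le N$. Let $I_{\boldsymbol n}$ be the support of $\boldsymbol n$, and let $\widehat M=\widehat M(n)$ be a function of $n\in I_{\boldsymbol n}$ taking values in $\{m\in\mathbb{Z}:r\le m\le N\}$. Then $$\Pr\{\boldsymbol n\le n\mid M\}\le\frac{\binom N{\widehat M}\binom{N-n}{M-r}}{\binom NM\binom{N-n}{\widehat M-r}}=\frac{\binom Mr\binom{N-M}{n-r}}{\binom{\widehat M}r\binom{N-\widehat M}{n-r}}\quad\text{for } n\in I_{\boldsymbol n}\text{ such that }\widehat M(n)\ge M,$$ $$\Pr\{\boldsymbol n\ge n\mid M\}\le\frac{\binom N{\widehat M}\binom{N-n}{M-r}}{\binom NM\binom{N-n}{\widehat M-r}}=\frac{\binom Mr\binom{N-M}{n-r}}{\binom{\widehat M}r\binom{N-\widehat M}{n-r}}\quad\text{for } n\in I_{\boldsymbol n}\text{ such that }\widehat M(n)\le M.$$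
   Context: $\Pr\{\cdot\mid M\}$ denotes probability when the population contains $M$ units with the attribute. *)

theory Defs
  imports Complex_Main
begin

definition inv_hyp_pmf :: "nat \<Rightarrow> nat \<Rightarrow> nat \<Rightarrow> nat \<Rightarrow> real" where
  "inv_hyp_pmf N M r k =
     (if r \<le> k \<and> k \<le> N
      then real ((k - 1) choose (r - 1)) * real ((N - k) choose (M - r)) / real (N choose M)
      else 0)"

definition inv_hyp_support :: "nat \<Rightarrow> nat \<Rightarrow> nat \<Rightarrow> nat set" where
  "inv_hyp_support N M r = {k. inv_hyp_pmf N M r k > 0}"

definition inv_hyp_le :: "nat \<Rightarrow> nat \<Rightarrow> nat \<Rightarrow> nat \<Rightarrow> real" where
  "inv_hyp_le N M r k = (\<Sum>j\<in>{..k}. inv_hyp_pmf N M r j)"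

definition inv_hyp_ge :: "nat \<Rightarrow> nat \<Rightarrow> nat \<Rightarrow> nat \<Rightarrow> real" where
  "inv_hyp_ge N M r k = (\<Sum>j\<in>{k..N}. inv_hyp_pmf N M r j)"

end

theory Submission imports Defs begin

lemma upper_vdm: "(\<Sum>i\<le>n. (i choose a) * ((n - i) choose b)) = Suc n choose (a + b + 1)"
proof (induction n arbitrary: b)
  case 0
  then show ?case by (cases a; cases b) auto
next
  case (Suc n)
  show ?case
  proof (cases b)
    case 0
    then show ?thesis using sum_choose_upper[where m=a and n="Suc n"] by simp
  next
    case (Suc c)
    have "(\<Sum>i\<le>Suc n. (i choose a) * ((Suc n - i) choose b))
        = (\<Sum>i\<le>n. (i choose a) * ((Suc n - i) choose b))"
      using Suc by simp
    also have "\<dots> = (\<Sum>i\<le>n. (i choose a) * ((n - i) choose b) + (i choose a) * ((n - i) choose c))"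
      by (rule sum.cong) (auto simp: Suc Suc_diff_le algebra_simps)
    also have "\<dots> = (Suc n choose (a + b + 1)) + (Suc n choose (a + c + 1))"
      by (simp add: sum.distrib Suc.IH)
    also have "\<dots> = Suc (Suc n) choose (a + b + 1)" using Suc by simp
    finally show ?thesis .
  qed
qed

lemma pmf_total:
  assumes "0 < r" "r \<le> m" "m \<le> N"
  shows "(\<Sum>j\<le>N. inv_hyp_pmf N m r j) = 1"
proof -
  have N: "N \<ge> 1" using assms by simp
  have "(\<Sum>j\<le>N. inv_hyp_pmf N m r j) = (\<Sum>j\<in>{1..N}. inv_hyp_pmf N m r j)"
  proof -
    have "{..N} = insert 0 {1..N}" by auto
    then show ?thesis using assms by (simp add: inv_hyp_pmf_def)
  qed
  also have "\<dots> = (\<Sum>i<N. inv_hyp_pmf N m r (Suc i))"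
    by (rule sum_bounds_lt_plus1[symmetric])
  also have "\<dots> = (\<Sum>i<N. real (i choose (r - 1)) * real (((N - 1) - i) choose (m - r)) / real (N choose m))"
  proof (rule sum.cong)
    fix i assume i: "i \<in> {..<N}"
    show "inv_hyp_pmf N m r (Suc i) = real (i choose (r - 1)) * real (((N - 1) - i) choose (m - r)) / real (N choose m)"
    proof (cases "r \<le> Suc i")
      case True then show ?thesis using i by (simp add: inv_hyp_pmf_def)
    next
      case False then have "i choose (r - 1) = 0" by simp
      then show ?thesis using False by (simp add: inv_hyp_pmf_def)
    qed
  qed simp
  also have "\<dots> = real (\<Sum>i\<le>N - 1. (i choose (r - 1)) * (((N - 1) - i) choose (m - r))) / real (N choose m)"
  proof -
    have "{..<N} = {..N-1}" using N by auto
    then show ?thesis by (simp add: sum_divide_distrib)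
  qed
  also have "\<dots> = 1"
  proof -
    have e: "Suc (N - 1) = N" "r - 1 + (m - r) + 1 = m" using assms N by auto
    have "(\<Sum>i\<le>N - 1. (i choose (r - 1)) * (((N - 1) - i) choose (m - r))) = N choose m"
      using upper_vdm[where n="N - 1" and a="r - 1" and b="m - r"] unfolding e .
    moreover have "N choose m > 0" using assms by simp
    ultimately show ?thesis by simp
  qed
  finally show ?thesis .
qed

lemma cross:
  assumes "x \<le> y" "y \<le> s" "s \<le> g"
  shows "(g choose x) * (s choose y) \<le> (s choose x) * (g choose y)"
  using assms(3)
proof (induction g rule: dec_induct)
  case base then show ?case by simp
next
  case (step g)
  define u where "u = Suc g choose x"
  define v where "v = Suc g choose y"
  have hu: "(Suc g - x) * u = Suc g * (g choose x)" unfolding u_def using binomial_absorb_comp[of "Suc g" x] by simp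
  have hv: "(Suc g - y) * v = Suc g * (g choose y)" unfolding v_def using binomial_absorb_comp[of "Suc g" y] by simp
  have pos: "(Suc g - x) * (Suc g - y) > 0" using assms step by auto
  have le: "Suc g - y \<le> Suc g - x" using assms by simp
  have "(u * (s choose y)) * ((Suc g - x) * (Suc g - y)) = ((Suc g - x) * u) * (s choose y) * (Suc g - y)"
    by (simp only: ac_simps)
  also have "\<dots> = (Suc g * (g choose x)) * (s choose y) * (Suc g - y)"
    by (simp only: hu)
  also have "\<dots> = Suc g * ((g choose x) * (s choose y)) * (Suc g - y)"
    by (simp only: ac_simps)
  also have "\<dots> \<le> Suc g * ((s choose x) * (g choose y)) * (Suc g - x)"
    by (rule mult_le_mono[OF mult_le_mono2[OF step.IH] le])
  also have "\<dots> = (s choose x) * (Suc g * (g choose y)) * (Suc g - x)"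
    by (simp only: ac_simps)
  also have "\<dots> = (s choose x) * ((Suc g - y) * v) * (Suc g - x)"
    by (simp only: hv)
  also have "\<dots> = ((s choose x) * v) * ((Suc g - x) * (Suc g - y))"
    by (simp only: ac_simps)
  finally have "u * (s choose y) \<le> (s choose x) * v" using pos by simp
  then show ?case unfolding u_def v_def .
qed


lemma sum_bound:
  fixes p q :: "nat \<Rightarrow> real"
  assumes "finite A" "q k > 0" "\<And>j. j \<in> A \<Longrightarrow> p j * q k \<le> p k * q j"
    "sum q A \<le> 1" "p k \<ge> 0"
  shows "sum p A \<le> p k / q k"
proof -
  have "sum p A * q k = (\<Sum>j\<in>A. p j * q k)" by (simp add: sum_distrib_right)
  also have "\<dots> \<le> (\<Sum>j\<in>A. p k * q j)" by (rule sum_mono) (use assms in auto)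
  also have "\<dots> = p k * sum q A" by (simp add: sum_distrib_left)
  also have "\<dots> \<le> p k" using assms mult_left_mono[of "sum q A" 1 "p k"] by simp
  finally show ?thesis using assms by (simp add: pos_le_divide_eq)
qed

lemma swap_choose:
  "(A choose a) * ((A - a) choose b) = (A choose b) * ((A - b) choose a)"
proof (cases "a + b \<le> A")
  case True
  have 1: "(A choose (a+b)) * ((a+b) choose a) = (A choose a) * ((A - a) choose b)"
    using choose_mult[of a "a+b" A] True by simp
  have 2: "(A choose (a+b)) * ((a+b) choose b) = (A choose b) * ((A - b) choose a)"
    using choose_mult[of b "a+b" A] True by simp
  have "(a+b) choose a = (a+b) choose b" using binomial_symmetric[of a "a+b"] by simp
  then show ?thesis using 1 2 by simp
next
  case False
  then have "(A choose a) * ((A - a) choose b) = 0" by (cases "a \<le> A") auto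
  moreover have "(A choose b) * ((A - b) choose a) = 0" using False by (cases "b \<le> A") auto
  ultimately show ?thesis by (simp only:)
qed

lemma K_ident:
  assumes "r \<le> m" "m \<le> N" "r \<le> n" "n \<le> N"
  shows "(N choose m) * (m choose r) * ((N - m) choose (n - r))
       = (N choose n) * (n choose r) * ((N - n) choose (m - r))"
proof -
  have 1: "(N choose m) * (m choose r) = (N choose r) * ((N - r) choose (m - r))"
    using choose_mult[of r m N] assms by simp
  have 2: "(N choose n) * (n choose r) = (N choose r) * ((N - r) choose (n - r))"
    using choose_mult[of r n N] assms by simp
  have 3: "((N - r) choose (m - r)) * ((N - r - (m - r)) choose (n - r))
        = ((N - r) choose (n - r)) * ((N - r - (n - r)) choose (m - r))"
    by (rule swap_choose)
  have e1: "N - r - (m - r) = N - m" and e2: "N - r - (n - r) = N - n" using assms by auto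
  show ?thesis using 1 2 3 unfolding e1 e2 by (simp add: mult.assoc)
qed

lemma pair_ineq:
  assumes "0 < r" "r \<le> m" "m \<le> N" "r \<le> h" "h \<le> N" "r \<le> k" "k \<le> N"
    and cond: "real ((N - j) choose (m - r)) * real ((N - k) choose (h - r))
             \<le> real ((N - k) choose (m - r)) * real ((N - j) choose (h - r))"
  shows "inv_hyp_pmf N m r j * inv_hyp_pmf N h r k \<le> inv_hyp_pmf N m r k * inv_hyp_pmf N h r j"
proof (cases "r \<le> j \<and> j \<le> N")
  case False
  then have "inv_hyp_pmf N m r j = 0" "inv_hyp_pmf N h r j = 0" by (auto simp: inv_hyp_pmf_def)
  then show ?thesis by simp
next
  case True
  define c where "c = real ((j - 1) choose (r - 1)) * real ((k - 1) choose (r - 1))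
     / (real (N choose m) * real (N choose h))"
  have c: "c \<ge> 0" unfolding c_def by simp
  have L: "inv_hyp_pmf N m r j * inv_hyp_pmf N h r k
     = c * (real ((N - j) choose (m - r)) * real ((N - k) choose (h - r)))"
    using True assms unfolding inv_hyp_pmf_def c_def by simp
  have R: "inv_hyp_pmf N m r k * inv_hyp_pmf N h r j
     = c * (real ((N - k) choose (m - r)) * real ((N - j) choose (h - r)))"
    using True assms unfolding inv_hyp_pmf_def c_def by simp
  show ?thesis unfolding L R using c cond by (rule mult_left_mono[rotated])
qed

theorem corollary6:
  fixes N M r :: nat and Mhat :: "nat \<Rightarrow> nat"
  assumes "0 < r" and "r \<le> M" and "M \<le> N"
    and "\<forall>k\<in>inv_hyp_support N M r. r \<le> Mhat k \<and> Mhat k \<le> N"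
  shows "\<forall>n\<in>inv_hyp_support N M r.
     real (N choose Mhat n) * real ((N - n) choose (M - r))
       / (real (N choose M) * real ((N - n) choose (Mhat n - r)))
     = real (M choose r) * real ((N - M) choose (n - r))
       / (real (Mhat n choose r) * real ((N - Mhat n) choose (n - r)))
   \<and> (M \<le> Mhat n \<and> (N - n) choose (Mhat n - r) \<noteq> 0 \<longrightarrow>
       inv_hyp_le N M r n \<le> real (N choose Mhat n) * real ((N - n) choose (M - r))
         / (real (N choose M) * real ((N - n) choose (Mhat n - r))))
   \<and> (Mhat n \<le> M \<and> (N - n) choose (Mhat n - r) \<noteq> 0 \<longrightarrow>
       inv_hyp_ge N M r n \<le> real (N choose Mhat n) * real ((N - n) choose (M - r))
         / (real (N choose M) * real ((N - n) choose (Mhat n - r))))"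
  proof
  fix n assume n: "n \<in> inv_hyp_support N M r"
  have pn: "inv_hyp_pmf N M r n > 0" using n by (simp add: inv_hyp_support_def)
  then have rn: "r \<le> n" "n \<le> N" by (auto simp: inv_hyp_pmf_def split: if_splits)
  have cM: "(N - n) choose (M - r) \<noteq> 0"
  proof
    assume "(N - n) choose (M - r) = 0"
    then have "inv_hyp_pmf N M r n = 0" unfolding inv_hyp_pmf_def by simp
    with pn show False by simp
  qed
  define h where "h = Mhat n"
  have h: "r \<le> h" "h \<le> N" using assms(4) n unfolding h_def by auto
  define P where "P = real (N choose n) * real (n choose r)"
  have P: "P > 0" unfolding P_def using rn by simp
  define X where "X = (\<lambda>m. real ((N - n) choose (m - r)) / real (N choose m))"
  have X: "X m = real (m choose r) * real ((N - m) choose (n - r)) / P" if "r \<le> m" "m \<le> N" for m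
  proof -
    have "real (N choose m) * real (m choose r) * real ((N - m) choose (n - r))
       = P * real ((N - n) choose (m - r))"
      using K_ident[OF that rn] unfolding P_def by (metis of_nat_mult)
    moreover have "real (N choose m) > 0" using that by simp
    ultimately show ?thesis unfolding X_def using P by (simp add: field_simps)
  qed
  have eq1: "real (N choose h) * real ((N - n) choose (M - r))
       / (real (N choose M) * real ((N - n) choose (h - r))) = X M / X h"
    unfolding X_def by (simp add: field_simps)
  have eq2: "real (M choose r) * real ((N - M) choose (n - r))
       / (real (h choose r) * real ((N - h) choose (n - r))) = X M / X h"
  proof -
    have a: "real (M choose r) * real ((N - M) choose (n - r)) = P * X M"
      using X[of M] assms P by simp
    have b: "real (h choose r) * real ((N - h) choose (n - r)) = P * X h"
      using X[of h] h P by simp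
    show ?thesis unfolding a b using P by simp
  qed
  define B where "B = real (N choose h) * real ((N - n) choose (M - r))
       / (real (N choose M) * real ((N - n) choose (h - r)))"
  have Bq: "(N - n) choose (h - r) \<noteq> 0 \<Longrightarrow> B = inv_hyp_pmf N M r n / inv_hyp_pmf N h r n"
    unfolding B_def inv_hyp_pmf_def using rn assms h by (simp add: field_simps)
  have qpos: "(N - n) choose (h - r) \<noteq> 0 \<Longrightarrow> inv_hyp_pmf N h r n > 0"
    unfolding inv_hyp_pmf_def using rn assms h by simp
  have tot: "(\<Sum>j\<le>N. inv_hyp_pmf N h r j) = 1" using pmf_total[of r h N] assms h by simp
  have qnn: "\<And>j. inv_hyp_pmf N h r j \<ge> 0" by (simp add: inv_hyp_pmf_def)
  have pnn: "inv_hyp_pmf N M r n \<ge> 0" using pn by simp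
  have le: "inv_hyp_le N M r n \<le> B" if "M \<le> h" "(N - n) choose (h - r) \<noteq> 0"
  proof -
    have hr: "h - r \<le> N - n" using that(2) by (metis binomial_eq_0 not_le)
    have "inv_hyp_le N M r n \<le> inv_hyp_pmf N M r n / inv_hyp_pmf N h r n"
      unfolding inv_hyp_le_def
    proof (rule sum_bound)
      show "sum (inv_hyp_pmf N h r) {..n} \<le> 1"
        using sum_mono2[of "{..N}" "{..n}" "inv_hyp_pmf N h r"] rn qnn tot by auto
      fix j assume "j \<in> {..n}"
      then have j: "j \<le> n" by simp
      have "((N - j) choose (M - r)) * ((N - n) choose (h - r))
             \<le> ((N - n) choose (M - r)) * ((N - j) choose (h - r))"
        by (rule cross) (use that hr j in auto)
      then show "inv_hyp_pmf N M r j * inv_hyp_pmf N h r n \<le> inv_hyp_pmf N M r n * inv_hyp_pmf N h r j"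
        using assms h rn by (intro pair_ineq) (auto simp flip: of_nat_mult)
    qed (use qpos that pnn in auto)
    then show ?thesis using Bq that by simp
  qed
  have ge: "inv_hyp_ge N M r n \<le> B" if "h \<le> M" "(N - n) choose (h - r) \<noteq> 0"
  proof -
    have "inv_hyp_ge N M r n \<le> inv_hyp_pmf N M r n / inv_hyp_pmf N h r n"
      unfolding inv_hyp_ge_def
    proof (rule sum_bound)
      show "sum (inv_hyp_pmf N h r) {n..N} \<le> 1"
        using sum_mono2[of "{..N}" "{n..N}" "inv_hyp_pmf N h r"] rn qnn tot by auto
      fix j assume "j \<in> {n..N}"
      then have j: "n \<le> j" by simp
      have "((N - j) choose (M - r)) * ((N - n) choose (h - r))
             \<le> ((N - n) choose (M - r)) * ((N - j) choose (h - r))"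
      proof (cases "M - r \<le> N - j")
        case True
        have "((N - n) choose (h - r)) * ((N - j) choose (M - r))
             \<le> ((N - j) choose (h - r)) * ((N - n) choose (M - r))"
          by (rule cross) (use that True j in auto)
        then show ?thesis by (simp add: mult.commute)
      next
        case False
        then have "(N - j) choose (M - r) = 0" by (meson binomial_eq_0 not_le)
        then show ?thesis by (metis mult_0 zero_le)
      qed
      then show "inv_hyp_pmf N M r j * inv_hyp_pmf N h r n \<le> inv_hyp_pmf N M r n * inv_hyp_pmf N h r j"
        using assms h rn by (intro pair_ineq) (auto simp flip: of_nat_mult)
    qed (use qpos that pnn in auto)
    then show ?thesis using Bq that by simp
  qed
  show "real (N choose Mhat n) * real ((N - n) choose (M - r))
       / (real (N choose M) * real ((N - n) choose (Mhat n - r)))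
     = real (M choose r) * real ((N - M) choose (n - r))
       / (real (Mhat n choose r) * real ((N - Mhat n) choose (n - r)))
   \<and> (M \<le> Mhat n \<and> (N - n) choose (Mhat n - r) \<noteq> 0 \<longrightarrow>
       inv_hyp_le N M r n \<le> real (N choose Mhat n) * real ((N - n) choose (M - r))
         / (real (N choose M) * real ((N - n) choose (Mhat n - r))))
   \<and> (Mhat n \<le> M \<and> (N - n) choose (Mhat n - r) \<noteq> 0 \<longrightarrow>
       inv_hyp_ge N M r n \<le> real (N choose Mhat n) * real ((N - n) choose (M - r))
         / (real (N choose M) * real ((N - n) choose (Mhat n - r))))"
    using eq1 eq2 le ge unfolding B_def h_def by auto
qed

end
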